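(* Let $\Gamma$ be a first-order expansion of $(\mathbb{Z};\mathrm{suc})$. If $\Gamma$ primitive positively defines a relation that is not Horn-definable over $(\mathbb{Z};\mathrm{suc})$, then $\Gamma$ also primitive positively defines a binary relation that is not Horn-definable over $(\mathbb{Z};\mathrm{suc})$.
   Context: $\mathrm{suc}^p=\{(x,y)\in\mathbb{Z}^2:y=x+p\}$ for $p\in\mathbb{Z}$, $\mathrm{suc}=\mathrm{suc}^1$. A first-order expansion of $(\mathbb{Z};\mathrm{suc})$ is a relational structure with domain $\mathbb{Z}$ whose relations are first-order definable in $(\mathbb{Z};\mathrm{suc})$ and in which $\mathrm{suc}$ is primitive positive definable. A relation is Horn-definable over $(\mathbb{Z};\mathrm{suc})$ if it is defined in $(\mathbb{Z};\mathrm{suc})$ by a quantifier-free formula in conjunctive normal form whose literals are of the form $\mathrm{suc}^p(x,y)$ or $\neg\mathrm{suc}^p(x,y)$ and in which each clause contains at most one positive (unnegated) literal. *)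

theory Defs
  imports Main
begin

definition asg :: "int list \<Rightarrow> nat \<Rightarrow> int" where
  "asg xs i = (if i < length xs then xs ! i else 0)"

definition suc_pow :: "int \<Rightarrow> (int \<times> int) set" where
  "suc_pow p = {(x, y). y = x + p}"

definition suc_rel :: "int list set" where
  "suc_rel = {xs. length xs = 2 \<and> (xs ! 0, xs ! 1) \<in> suc_pow 1}"

datatype fo = FSuc nat nat | FEq nat nat | FNot fo | FAnd fo fo | FEx nat fo

fun fo_sat :: "fo \<Rightarrow> (nat \<Rightarrow> int) \<Rightarrow> bool" where
  "fo_sat (FSuc x y) s = ((s x, s y) \<in> suc_pow 1)"
| "fo_sat (FEq x y) s = (s x = s y)"
| "fo_sat (FNot \<phi>) s = (\<not> fo_sat \<phi> s)"
| "fo_sat (FAnd \<phi> \<psi>) s = (fo_sat \<phi> s \<and> fo_sat \<psi> s)"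
| "fo_sat (FEx v \<phi>) s = (\<exists>a. fo_sat \<phi> (s(v := a)))"

fun fo_fv :: "fo \<Rightarrow> nat set" where
  "fo_fv (FSuc x y) = {x, y}"
| "fo_fv (FEq x y) = {x, y}"
| "fo_fv (FNot \<phi>) = fo_fv \<phi>"
| "fo_fv (FAnd \<phi> \<psi>) = fo_fv \<phi> \<union> fo_fv \<psi>"
| "fo_fv (FEx v \<phi>) = fo_fv \<phi> - {v}"

definition fo_definable :: "nat \<Rightarrow> int list set \<Rightarrow> bool" where
  "fo_definable n R \<longleftrightarrow> (\<exists>\<phi>. fo_fv \<phi> \<subseteq> {..<n} \<and>
      R = {xs. length xs = n \<and> fo_sat \<phi> (asg xs)})"

text \<open>A structure with domain Z is given by its set of relations, each tagged with its arity.\<close>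
type_synonym zstructure = "(nat \<times> int list set) set"

datatype pp = PRel nat "int list set" "nat list" | PEq nat nat | PAnd pp pp | PEx nat pp

fun pp_sat :: "pp \<Rightarrow> (nat \<Rightarrow> int) \<Rightarrow> bool" where
  "pp_sat (PRel k R vs) s = (map s vs \<in> R)"
| "pp_sat (PEq x y) s = (s x = s y)"
| "pp_sat (PAnd \<phi> \<psi>) s = (pp_sat \<phi> s \<and> pp_sat \<psi> s)"
| "pp_sat (PEx v \<phi>) s = (\<exists>a. pp_sat \<phi> (s(v := a)))"

fun pp_fv :: "pp \<Rightarrow> nat set" where
  "pp_fv (PRel k R vs) = set vs"
| "pp_fv (PEq x y) = {x, y}"
| "pp_fv (PAnd \<phi> \<psi>) = pp_fv \<phi> \<union> pp_fv \<psi>"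
| "pp_fv (PEx v \<phi>) = pp_fv \<phi> - {v}"

fun pp_wf :: "zstructure \<Rightarrow> pp \<Rightarrow> bool" where
  "pp_wf \<Gamma> (PRel k R vs) = ((k, R) \<in> \<Gamma> \<and> length vs = k)"
| "pp_wf \<Gamma> (PEq x y) = True"
| "pp_wf \<Gamma> (PAnd \<phi> \<psi>) = (pp_wf \<Gamma> \<phi> \<and> pp_wf \<Gamma> \<psi>)"
| "pp_wf \<Gamma> (PEx v \<phi>) = pp_wf \<Gamma> \<phi>"

definition pp_definable :: "zstructure \<Rightarrow> nat \<Rightarrow> int list set \<Rightarrow> bool" where
  "pp_definable \<Gamma> n R \<longleftrightarrow> (\<exists>\<phi>. pp_wf \<Gamma> \<phi> \<and> pp_fv \<phi> \<subseteq> {..<n} \<and>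
      R = {xs. length xs = n \<and> pp_sat \<phi> (asg xs)})"

definition fo_expansion :: "zstructure \<Rightarrow> bool" where
  "fo_expansion \<Gamma> \<longleftrightarrow> (\<forall>(k, R) \<in> \<Gamma>. fo_definable k R) \<and> pp_definable \<Gamma> 2 suc_rel"

text \<open>A literal (b, p, x, y) stands for suc^p(x,y) if b, and for its negation otherwise.
  A CNF is a list of clauses, each clause a list of literals (empty clause = false).\<close>
type_synonym literal = "bool \<times> int \<times> nat \<times> nat"

definition lit_sat :: "literal \<Rightarrow> (nat \<Rightarrow> int) \<Rightarrow> bool" where
  "lit_sat l s = (case l of (b, p, x, y) \<Rightarrow> (((s x, s y) \<in> suc_pow p) = b))"

definition horn_clause :: "literal list \<Rightarrow> bool" where
  "horn_clause c \<longleftrightarrow> length (filter (\<lambda>l. fst l) c) \<le> 1"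

definition horn_definable :: "nat \<Rightarrow> int list set \<Rightarrow> bool" where
  "horn_definable n R \<longleftrightarrow> (\<exists>cls :: literal list list.
      (\<forall>c \<in> set cls. horn_clause c \<and>
         (\<forall>(b, p, x, y) \<in> set c. x < n \<and> y < n)) \<and>
      R = {xs. length xs = n \<and> (\<forall>c \<in> set cls. \<exists>l \<in> set c. lit_sat l (asg xs))})"

end

theory Submission
  imports Defs
begin


definition del :: "nat \<Rightarrow> 'a list \<Rightarrow> 'a list" where
  "del k xs = take k xs @ drop (Suc k) xs"

lemma length_del[simp]: "k < length xs \<Longrightarrow> length (del k xs) = length xs - 1"
  by (simp add: del_def)

lemma nth_del: "k < length xs \<Longrightarrow> i < length xs - 1 \<Longrightarrow>
   del k xs ! i = xs ! (if i < k then i else Suc i)"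
  by (auto simp add: del_def nth_append)

lemma del_nth_eq: assumes "length xs = length ys" "k < length xs" "del k xs = del k ys"
  "i < length xs" "i \<noteq> k" shows "xs ! i = ys ! i"
proof (cases "i < k")
  case True
  then have "del k xs ! i = xs ! i" "del k ys ! i = ys ! i" using assms(1,2,4) True by (simp_all add: nth_del)
  then show ?thesis using assms(3) by metis
next
  case False
  then obtain j where j: "i = Suc j" "k \<le> j" using assms(5) by (cases i) auto
  then have "del k xs ! j = xs ! i" "del k ys ! j = ys ! i" using assms(1,2,4)
    nth_del[of k xs j] nth_del[of k ys j] by auto
  then show ?thesis using assms(3) by metis
qed

lemma del_eq: assumes "length xs = length ys" "k < length xs" "del k xs = del k ys"
  "xs ! k = ys ! k" shows "xs = ys"
proof (rule nth_equalityI)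
  show "length xs = length ys" by fact
  fix i assume "i < length xs"
  then show "xs ! i = ys ! i" using del_nth_eq[OF assms(1-3)] assms(4) by (cases "i = k") auto
qed

definition comb :: "int list \<Rightarrow> int list \<Rightarrow> int \<Rightarrow> int list" where
  "comb a b K = map (\<lambda>i. a!i + K*(b!i - a!i)) [0..<length a]"

lemma length_comb[simp]: "length (comb a b K) = length a"
  by (simp add: comb_def)

lemma nth_comb[simp]: "i < length a \<Longrightarrow> comb a b K ! i = a!i + K*(b!i - a!i)"
  by (simp add: comb_def)

lemma comb_del: assumes "length a = length b" "k < length a"
  shows "del k (comb a b K) = comb (del k a) (del k b) K"
proof (rule nth_equalityI)
  show "length (del k (comb a b K)) = length (comb (del k a) (del k b) K)" using assms by simp
  fix i assume "i < length (del k (comb a b K))"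
  then show "del k (comb a b K) ! i = comb (del k a) (del k b) K ! i"
    using assms by (simp add: nth_del)
qed

definition M :: "int list \<Rightarrow> int" where "M a = sum_list (map abs a)"

lemma abs_le_M: "i < length a \<Longrightarrow> \<bar>a!i\<bar> \<le> M a"
  unfolding M_def
  by (rule Groups_List.member_le_sum_list) (auto intro: imageI nth_mem)

lemma diff_le_M: "i < length a \<Longrightarrow> j < length a \<Longrightarrow> \<bar>a!j - a!i\<bar> \<le> 2 * M a"
  using abs_le_M[of i a] abs_le_M[of j a] by linarith

lemma big_mul: fixes K y x :: int assumes "0 \<le> K" "y \<noteq> 0" shows "K - \<bar>x\<bar> \<le> \<bar>x + K*y\<bar>"
proof -
  have "1 \<le> \<bar>y\<bar>" using assms by linarith
  then have "K * 1 \<le> K * \<bar>y\<bar>" using assms by (intro mult_left_mono) auto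
  also have "\<dots> = \<bar>K*y\<bar>" using assms by (simp add: abs_mult)
  finally show ?thesis by linarith
qed



definition sameV :: "int \<Rightarrow> nat set \<Rightarrow> (nat \<Rightarrow> int) \<Rightarrow> (nat \<Rightarrow> int) \<Rightarrow> bool" where
  "sameV B V s t \<longleftrightarrow> (\<forall>x\<in>V. \<forall>y\<in>V. s y - s x = t y - t x \<or> (B < \<bar>s y - s x\<bar> \<and> B < \<bar>t y - t x\<bar>))"

definition lcl :: "int \<Rightarrow> nat set \<Rightarrow> ((nat \<Rightarrow> int) \<Rightarrow> bool) \<Rightarrow> bool" where
  "lcl B V P \<longleftrightarrow> (\<forall>s t. sameV B V s t \<longrightarrow> P s = P t)"

lemma sameV_sym: "sameV B V s t \<Longrightarrow> sameV B V t s"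
  unfolding sameV_def by fastforce

lemma sameV_mono: "sameV B' V' s t \<Longrightarrow> B \<le> B' \<Longrightarrow> V \<subseteq> V' \<Longrightarrow> sameV B V s t"
  unfolding sameV_def by (smt (verit) subsetD)

lemma lcl_mono: assumes "lcl B V P" "B \<le> B'" "V \<subseteq> V'" shows "lcl B' V' P"
  unfolding lcl_def
proof (intro allI impI)
  fix s t assume "sameV B' V' s t"
  then have "sameV B V s t" using sameV_mono assms(2,3) by blast
  then show "P s = P t" using assms(1) unfolding lcl_def by blast
qed

lemma lcl_and: "lcl B1 V1 P \<Longrightarrow> lcl B2 V2 Q \<Longrightarrow> lcl (max B1 B2) (V1 \<union> V2) (\<lambda>s. P s \<and> Q s)"
proof -
  assume a: "lcl B1 V1 P" "lcl B2 V2 Q"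
  have "lcl (max B1 B2) (V1 \<union> V2) P" "lcl (max B1 B2) (V1 \<union> V2) Q"
    by (rule lcl_mono[OF a(1)]; simp)+ (rule lcl_mono[OF a(2)]; simp)+
  then show ?thesis unfolding lcl_def by blast
qed

lemma ex_step:
  assumes fin: "finite V" and B0: "0 \<le> B" and L: "lcl B V P"
    and st: "sameV (2*B) (V - {v}) s t" and Pa: "P (s(v:=a))"
  shows "\<exists>b. P (t(v:=b))"
proof -
  let ?U = "V - {v}"
  have key: "\<exists>b. \<forall>y\<in>?U. a - s y = b - t y \<or> (B < \<bar>a - s y\<bar> \<and> B < \<bar>b - t y\<bar>)"
  proof (cases "\<exists>x\<in>?U. \<bar>a - s x\<bar> \<le> B")
    case True
    then obtain x where x: "x \<in> ?U" "\<bar>a - s x\<bar> \<le> B" by blast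
    show ?thesis
    proof (intro exI ballI)
      fix y assume y: "y \<in> ?U"
      have "s y - s x = t y - t x \<or> (2*B < \<bar>s y - s x\<bar> \<and> 2*B < \<bar>t y - t x\<bar>)"
        using st x y unfolding sameV_def by blast
      then show "a - s y = t x + (a - s x) - t y \<or> (B < \<bar>a - s y\<bar> \<and> B < \<bar>t x + (a - s x) - t y\<bar>)"
        using x(2) by linarith
    qed
  next
    case False
    define b where "b = B + 1 + (\<Sum>x\<in>?U. \<bar>t x\<bar>)"
    show ?thesis
    proof (intro exI ballI)
      fix y assume y: "y \<in> ?U"
      have "\<bar>t y\<bar> \<le> (\<Sum>x\<in>?U. \<bar>t x\<bar>)"
        using fin y by (intro member_le_sum) auto
      then have "B < \<bar>b - t y\<bar>" unfolding b_def by linarith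
      moreover have "\<not> \<bar>a - s y\<bar> \<le> B" using False y by blast
      then have "B < \<bar>a - s y\<bar>" by linarith
      ultimately show "a - s y = b - t y \<or> (B < \<bar>a - s y\<bar> \<and> B < \<bar>b - t y\<bar>)" by blast
    qed
  qed
  then obtain b where b: "\<forall>y\<in>?U. a - s y = b - t y \<or> (B < \<bar>a - s y\<bar> \<and> B < \<bar>b - t y\<bar>)" by blast
  have "sameV B V (s(v:=a)) (t(v:=b))"
    unfolding sameV_def
  proof (intro ballI)
    fix x y assume x: "x \<in> V" and y: "y \<in> V"
    show "(s(v := a)) y - (s(v := a)) x = (t(v := b)) y - (t(v := b)) x \<or>
          (B < \<bar>(s(v := a)) y - (s(v := a)) x\<bar> \<and> B < \<bar>(t(v := b)) y - (t(v := b)) x\<bar>)"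
    proof (cases "x = v"; cases "y = v")
      assume "x = v" "y = v" then show ?thesis by simp
    next
      assume xv: "x = v" and yv: "y \<noteq> v"
      then have "a - s y = b - t y \<or> (B < \<bar>a - s y\<bar> \<and> B < \<bar>b - t y\<bar>)" using b y by blast
      then show ?thesis using xv yv by (auto simp: abs_minus_commute)
    next
      assume xv: "x \<noteq> v" and yv: "y = v"
      then have "a - s x = b - t x \<or> (B < \<bar>a - s x\<bar> \<and> B < \<bar>b - t x\<bar>)" using b x by blast
      then show ?thesis using xv yv by auto
    next
      assume xv: "x \<noteq> v" and yv: "y \<noteq> v"
      have "s y - s x = t y - t x \<or> (2*B < \<bar>s y - s x\<bar> \<and> 2*B < \<bar>t y - t x\<bar>)"
        using st x y xv yv unfolding sameV_def by blast
      then show ?thesis using xv yv B0 by auto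
    qed
  qed
  then show ?thesis using L Pa unfolding lcl_def by blast
qed

lemma lcl_ex: assumes "finite V" "0 \<le> B" "lcl B V P"
  shows "lcl (2*B) (V - {v}) (\<lambda>s. \<exists>a. P (s(v:=a)))"
  unfolding lcl_def
proof (intro allI impI)
  fix s t assume st: "sameV (2 * B) (V - {v}) s t"
  then have ts: "sameV (2 * B) (V - {v}) t s" by (rule sameV_sym)
  show "(\<exists>a. P (s(v := a))) = (\<exists>a. P (t(v := a)))"
    using ex_step[OF assms st] ex_step[OF assms ts] by blast
qed

lemma finite_fo_fv: "finite (fo_fv \<phi>)" by (induction \<phi>) auto
lemma finite_pp_fv: "finite (pp_fv \<phi>)" by (induction \<phi>) auto

lemma fo_lcl: "\<exists>B\<ge>0. lcl B (fo_fv \<phi>) (fo_sat \<phi>)"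
proof (induction \<phi>)
  case (FSuc x y)
  have "lcl 1 (fo_fv (FSuc x y)) (fo_sat (FSuc x y))"
    unfolding lcl_def sameV_def by (auto simp: suc_pow_def)
  then show ?case using zero_le_one by blast
next
  case (FEq x y)
  have "lcl 0 (fo_fv (FEq x y)) (fo_sat (FEq x y))"
    unfolding lcl_def sameV_def by auto
  then show ?case by blast
next
  case (FNot \<phi>)
  then obtain B where "B \<ge> 0" "lcl B (fo_fv \<phi>) (fo_sat \<phi>)" by blast
  then have "lcl B (fo_fv (FNot \<phi>)) (fo_sat (FNot \<phi>))" unfolding lcl_def by auto
  then show ?case using \<open>B \<ge> 0\<close> by blast
next
  case (FAnd \<phi> \<psi>)
  then obtain B1 B2 where "B1 \<ge> 0" "lcl B1 (fo_fv \<phi>) (fo_sat \<phi>)"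
    "B2 \<ge> 0" "lcl B2 (fo_fv \<psi>) (fo_sat \<psi>)" by blast
  moreover have "fo_sat (FAnd \<phi> \<psi>) = (\<lambda>s. fo_sat \<phi> s \<and> fo_sat \<psi> s)" by (rule ext) simp
  ultimately have "lcl (max B1 B2) (fo_fv (FAnd \<phi> \<psi>)) (fo_sat (FAnd \<phi> \<psi>))"
    using lcl_and[of B1 _ _ B2] by simp
  moreover have "0 \<le> max B1 B2" using \<open>B1 \<ge> 0\<close> by simp
  ultimately show ?case by blast
next
  case (FEx v \<phi>)
  then obtain B where "B \<ge> 0" "lcl B (fo_fv \<phi>) (fo_sat \<phi>)" by blast
  moreover have "fo_sat (FEx v \<phi>) = (\<lambda>s. \<exists>a. fo_sat \<phi> (s(v:=a)))" by (rule ext) simp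
  ultimately have "lcl (2*B) (fo_fv (FEx v \<phi>)) (fo_sat (FEx v \<phi>))"
    using lcl_ex[OF finite_fo_fv] by simp
  moreover have "0 \<le> 2*B" using \<open>B \<ge> 0\<close> by simp
  ultimately show ?case by blast
qed

definition sty :: "int \<Rightarrow> int list \<Rightarrow> int list \<Rightarrow> bool" where
  "sty B xs ys \<longleftrightarrow> length xs = length ys \<and> (\<forall>i<length xs. \<forall>j<length xs.
     xs!j - xs!i = ys!j - ys!i \<or> (B < \<bar>xs!j - xs!i\<bar> \<and> B < \<bar>ys!j - ys!i\<bar>))"

definition loc :: "nat \<Rightarrow> int list set \<Rightarrow> bool" where
  "loc n R \<longleftrightarrow> (\<forall>xs\<in>R. length xs = n) \<and> (\<exists>B\<ge>0. \<forall>xs ys. xs \<in> R \<longrightarrow> sty B xs ys \<longrightarrow> ys \<in> R)"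

lemma sty_sym: "sty B xs ys \<Longrightarrow> sty B ys xs"
  unfolding sty_def by fastforce

lemma loc_of_lcl: assumes "lcl B V P" "V \<subseteq> {..<n}" "R = {xs. length xs = n \<and> P (asg xs)}" "0 \<le> B"
  shows "loc n R"
  unfolding loc_def
proof (intro conjI exI[of _ B] allI impI)
  show "\<forall>xs\<in>R. length xs = n" using assms by auto
  show "0 \<le> B" by fact
  fix xs ys assume xs: "xs \<in> R" and st: "sty B xs ys"
  have "sameV B V (asg xs) (asg ys)"
    unfolding sameV_def
  proof (intro ballI)
    fix x y assume "x \<in> V" "y \<in> V"
    then have "x < length xs" "y < length xs" using assms xs by auto
    then show "asg xs y - asg xs x = asg ys y - asg ys x \<or>
         (B < \<bar>asg xs y - asg xs x\<bar> \<and> B < \<bar>asg ys y - asg ys x\<bar>)"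
      using st unfolding sty_def asg_def by auto
  qed
  then show "ys \<in> R" using assms(1,3) xs st unfolding lcl_def sty_def by auto
qed

lemma fo_loc: "fo_definable k R \<Longrightarrow> loc k R"
  unfolding fo_definable_def using fo_lcl loc_of_lcl by metis

lemma pp_lcl: assumes G: "\<forall>(k, R)\<in>\<Gamma>. loc k R"
  shows "pp_wf \<Gamma> \<phi> \<Longrightarrow> \<exists>B\<ge>0. lcl B (pp_fv \<phi>) (pp_sat \<phi>)"
proof (induction \<phi>)
  case (PRel k R vs)
  then have "loc k R" "length vs = k" using G by auto
  then obtain B where B: "B \<ge> 0" "\<forall>xs ys. xs \<in> R \<longrightarrow> sty B xs ys \<longrightarrow> ys \<in> R"
    unfolding loc_def by blast
  have "lcl B (set vs) (\<lambda>s. map s vs \<in> R)"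
    unfolding lcl_def
  proof (intro allI impI)
    fix s t assume "sameV B (set vs) s t"
    then have "sty B (map s vs) (map t vs)" unfolding sty_def sameV_def by auto
    then show "(map s vs \<in> R) = (map t vs \<in> R)" using B sty_sym by blast
  qed
  then show ?case using B by (intro exI[of _ B]) (simp add: fun_eq_iff)
next
  case (PEq x y)
  have "lcl 0 (pp_fv (PEq x y)) (pp_sat (PEq x y))"
    unfolding lcl_def sameV_def by auto
  then show ?case by blast
next
  case (PAnd \<phi> \<psi>)
  then obtain B1 B2 where "B1 \<ge> 0" "lcl B1 (pp_fv \<phi>) (pp_sat \<phi>)"
    "B2 \<ge> 0" "lcl B2 (pp_fv \<psi>) (pp_sat \<psi>)" by auto
  moreover have "pp_sat (PAnd \<phi> \<psi>) = (\<lambda>s. pp_sat \<phi> s \<and> pp_sat \<psi> s)" by (rule ext) simp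
  ultimately have "lcl (max B1 B2) (pp_fv (PAnd \<phi> \<psi>)) (pp_sat (PAnd \<phi> \<psi>))"
    using lcl_and[of B1 _ _ B2] by simp
  moreover have "0 \<le> max B1 B2" using \<open>B1 \<ge> 0\<close> by simp
  ultimately show ?case by blast
next
  case (PEx v \<phi>)
  then obtain B where "B \<ge> 0" "lcl B (pp_fv \<phi>) (pp_sat \<phi>)" by auto
  moreover have "pp_sat (PEx v \<phi>) = (\<lambda>s. \<exists>a. pp_sat \<phi> (s(v:=a)))" by (rule ext) simp
  ultimately have "lcl (2*B) (pp_fv (PEx v \<phi>)) (pp_sat (PEx v \<phi>))"
    using lcl_ex[OF finite_pp_fv] by simp
  moreover have "0 \<le> 2*B" using \<open>B \<ge> 0\<close> by simp
  ultimately show ?case by blast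
qed

lemma pp_loc: assumes "fo_expansion \<Gamma>" "pp_definable \<Gamma> n R" shows "loc n R"
proof -
  have G: "\<forall>(k, R)\<in>\<Gamma>. loc k R" using assms(1) fo_loc unfolding fo_expansion_def by auto
  obtain \<phi> where "pp_wf \<Gamma> \<phi>" "pp_fv \<phi> \<subseteq> {..<n}" "R = {xs. length xs = n \<and> pp_sat \<phi> (asg xs)}"
    using assms(2) unfolding pp_definable_def by blast
  then show ?thesis using pp_lcl[OF G] loc_of_lcl by metis
qed



fun rn :: "(nat \<Rightarrow> nat) \<Rightarrow> pp \<Rightarrow> pp" where
  "rn f (PRel k R vs) = PRel k R (map f vs)"
| "rn f (PEq x y) = PEq (f x) (f y)"
| "rn f (PAnd \<phi> \<psi>) = PAnd (rn f \<phi>) (rn f \<psi>)"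
| "rn f (PEx v \<phi>) = PEx (f v) (rn f \<phi>)"

lemma sat_rn: "inj f \<Longrightarrow> pp_sat (rn f \<phi>) s = pp_sat \<phi> (s \<circ> f)"
proof (induction \<phi> arbitrary: s)
  case (PEx v \<phi>)
  have e: "\<And>a. (s(f v := a)) \<circ> f = (s \<circ> f)(v := a)"
    using PEx.prems by (auto simp: fun_eq_iff inj_eq)
  have "pp_sat (rn f (PEx v \<phi>)) s = (\<exists>a. pp_sat (rn f \<phi>) (s(f v := a)))" by simp
  also have "\<dots> = (\<exists>a. pp_sat \<phi> ((s(f v := a)) \<circ> f))" by (simp only: PEx.IH[OF PEx.prems])
  also have "\<dots> = (\<exists>a. pp_sat \<phi> ((s \<circ> f)(v := a)))" by (simp only: e)
  finally show ?case by (simp only: pp_sat.simps)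
qed auto

lemma wf_rn: "pp_wf \<Gamma> (rn f \<phi>) = pp_wf \<Gamma> \<phi>"
  by (induction \<phi>) auto

lemma fv_rn: "inj f \<Longrightarrow> pp_fv (rn f \<phi>) = f ` pp_fv \<phi>"
  by (induction \<phi>) (auto simp: image_set_diff)

lemma sat_cong: "(\<forall>x\<in>pp_fv \<phi>. s x = t x) \<Longrightarrow> pp_sat \<phi> s = pp_sat \<phi> t"
proof (induction \<phi> arbitrary: s t)
  case (PRel k R vs)
  then have e: "map s vs = map t vs" by (simp add: map_eq_conv)
  show ?case unfolding pp_sat.simps e ..
next
  case (PAnd \<phi>1 \<phi>2)
  have "pp_sat \<phi>1 s = pp_sat \<phi>1 t" using PAnd.prems by (intro PAnd.IH(1)) auto
  moreover have "pp_sat \<phi>2 s = pp_sat \<phi>2 t" using PAnd.prems by (intro PAnd.IH(2)) auto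
  ultimately show ?case by simp
next
  case (PEx v \<phi>)
  have "\<And>a. pp_sat \<phi> (s(v:=a)) = pp_sat \<phi> (t(v:=a))"
    using PEx.prems by (intro PEx.IH) auto
  then show ?case by simp
qed auto

definition pdef :: "zstructure \<Rightarrow> nat set \<Rightarrow> ((nat \<Rightarrow> int) \<Rightarrow> bool) \<Rightarrow> bool" where
  "pdef \<Gamma> V P \<longleftrightarrow> (\<exists>\<phi>. pp_wf \<Gamma> \<phi> \<and> pp_fv \<phi> \<subseteq> V \<and> (\<forall>s. pp_sat \<phi> s = P s))"

lemma suc_base:
  assumes "fo_expansion \<Gamma>"
  obtains \<phi> where "pp_wf \<Gamma> \<phi>" "pp_fv \<phi> \<subseteq> {0, 1}" "\<And>s. pp_sat \<phi> s = (s 1 = s 0 + 1)"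
proof -
  obtain \<phi> where \<phi>: "pp_wf \<Gamma> \<phi>" "pp_fv \<phi> \<subseteq> {..<2}"
    "suc_rel = {xs. length xs = 2 \<and> pp_sat \<phi> (asg xs)}"
    using assms unfolding fo_expansion_def pp_definable_def by blast
  have "pp_sat \<phi> s = (s 1 = s 0 + 1)" for s
  proof -
    have "\<forall>x\<in>pp_fv \<phi>. s x = asg [s 0, s 1] x"
    proof
      fix x assume "x \<in> pp_fv \<phi>"
      then have "x = 0 \<or> x = 1" using \<phi>(2) by auto
      then show "s x = asg [s 0, s 1] x" by (auto simp: asg_def)
    qed
    then have "pp_sat \<phi> s = pp_sat \<phi> (asg [s 0, s 1])" by (rule sat_cong)
    also have "\<dots> = ([s 0, s 1] \<in> suc_rel)" by (subst \<phi>(3)) simp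
    also have "\<dots> = (s 1 = s 0 + 1)" by (simp add: suc_rel_def suc_pow_def)
    finally show ?thesis .
  qed
  moreover have "pp_fv \<phi> \<subseteq> {0, 1}" using \<phi>(2) by auto
  ultimately show ?thesis using that \<phi>(1) by blast
qed

lemma suc_at: assumes "fo_expansion \<Gamma>" shows "pdef \<Gamma> {x, y} (\<lambda>s. s y = s x + 1)"
proof -
  obtain \<phi> where \<phi>: "pp_wf \<Gamma> \<phi>" "pp_fv \<phi> \<subseteq> {0, 1}" "\<And>s. pp_sat \<phi> s = (s 1 = s 0 + 1)"
    using suc_base[OF assms] by blast
  define N where "N = Suc (x + y)"
  have inj: "inj (\<lambda>i. i + N)" by (simp add: inj_def)
  define \<psi> where "\<psi> = PEx N (PEx (Suc N) (PAnd (PEq N x) (PAnd (PEq (Suc N) y) (rn (\<lambda>i. i + N) \<phi>))))"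
  have "pp_wf \<Gamma> \<psi>" using \<phi> by (simp add: \<psi>_def wf_rn)
  moreover have "pp_fv \<psi> \<subseteq> {x, y}" using \<phi>(2) by (auto simp: \<psi>_def fv_rn[OF inj])
  moreover have "pp_sat \<psi> s = (s y = s x + 1)" for s
  proof -
    have nx: "x \<noteq> N" "x \<noteq> Suc N" "y \<noteq> N" "y \<noteq> Suc N" by (auto simp: N_def)
    have "pp_sat \<psi> s = (\<exists>a b. a = s x \<and> b = s y \<and> b = a + 1)"
      unfolding \<psi>_def using nx by (simp add: sat_rn[OF inj] \<phi>(3))
    then show ?thesis by auto
  qed
  ultimately show ?thesis unfolding pdef_def by blast
qed

lemma off_nat: assumes "fo_expansion \<Gamma>" shows "pdef \<Gamma> {x, y} (\<lambda>s. s y = s x + int m)"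
proof (induction m arbitrary: x y)
  case 0
  have "pp_sat (PEq x y) s = (s y = s x + int 0)" for s by auto
  then show ?case unfolding pdef_def by (intro exI[of _ "PEq x y"]) auto
next
  case (Suc m)
  define z where "z = Suc (x + y)"
  obtain \<phi>1 where \<phi>1: "pp_wf \<Gamma> \<phi>1" "pp_fv \<phi>1 \<subseteq> {x, z}" "\<And>s. pp_sat \<phi>1 s = (s z = s x + int m)"
    using Suc.IH[of x z] unfolding pdef_def by blast
  obtain \<phi>2 where \<phi>2: "pp_wf \<Gamma> \<phi>2" "pp_fv \<phi>2 \<subseteq> {z, y}" "\<And>s. pp_sat \<phi>2 s = (s y = s z + 1)"
    using suc_at[OF assms, of z y] unfolding pdef_def by blast
  have nz: "x \<noteq> z" "y \<noteq> z" by (auto simp: z_def)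
  have "pp_sat (PEx z (PAnd \<phi>1 \<phi>2)) s = (s y = s x + int (Suc m))" for s
    using nz by (auto simp: \<phi>1(3) \<phi>2(3))
  moreover have "pp_fv (PEx z (PAnd \<phi>1 \<phi>2)) \<subseteq> {x, y}" using \<phi>1(2) \<phi>2(2) by auto
  ultimately show ?case unfolding pdef_def using \<phi>1(1) \<phi>2(1)
    by (intro exI[of _ "PEx z (PAnd \<phi>1 \<phi>2)"]) auto
qed

lemma off: assumes "fo_expansion \<Gamma>" shows "pdef \<Gamma> {x, y} (\<lambda>s. s y = s x + c)"
proof (cases "0 \<le> c")
  case True
  then show ?thesis using off_nat[OF assms, of x y "nat c"] by simp
next
  case False
  have "pdef \<Gamma> {y, x} (\<lambda>s. s x = s y + int (nat (- c)))" by (rule off_nat[OF assms])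
  moreover have "(\<lambda>s. s x = s y + int (nat (- c))) = (\<lambda>s. s y = s x + c)"
    using False by (auto simp: fun_eq_iff)
  ultimately show ?thesis by (simp add: insert_commute)
qed

lemma pp_lengths: "pp_definable \<Gamma> n R \<Longrightarrow> xs \<in> R \<Longrightarrow> length xs = n"
  unfolding pp_definable_def by auto

lemma restrict_pp:
  assumes "fo_expansion \<Gamma>" "pp_definable \<Gamma> n R" "p < n" "q < n"
  shows "pp_definable \<Gamma> n {xs \<in> R. xs!q = xs!p + c}"
proof -
  obtain \<phi> where \<phi>: "pp_wf \<Gamma> \<phi>" "pp_fv \<phi> \<subseteq> {..<n}" "R = {xs. length xs = n \<and> pp_sat \<phi> (asg xs)}"
    using assms(2) unfolding pp_definable_def by blast
  obtain \<psi> where \<psi>: "pp_wf \<Gamma> \<psi>" "pp_fv \<psi> \<subseteq> {p, q}" "\<And>s. pp_sat \<psi> s = (s q = s p + c)"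
    using off[OF assms(1), of p q c] unfolding pdef_def by blast
  have "{xs \<in> R. xs!q = xs!p + c} = {xs. length xs = n \<and> pp_sat (PAnd \<phi> \<psi>) (asg xs)}"
    using \<phi>(3) \<psi>(3) assms(3,4) by (auto simp: asg_def)
  moreover have "pp_fv (PAnd \<phi> \<psi>) \<subseteq> {..<n}" using \<phi>(2) \<psi>(2) assms(3,4) by auto
  ultimately show ?thesis unfolding pp_definable_def using \<phi>(1) \<psi>(1)
    by (intro exI[of _ "PAnd \<phi> \<psi>"]) auto
qed

definition ins :: "nat \<Rightarrow> 'a \<Rightarrow> 'a list \<Rightarrow> 'a list" where
  "ins k w ys = take k ys @ w # drop k ys"

lemma ins_props: assumes "k \<le> length ys"
  shows "length (ins k w ys) = Suc (length ys)" "del k (ins k w ys) = ys" "ins k w ys ! k = w"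
  using assms by (auto simp: ins_def del_def nth_append min_def)

definition pf :: "nat \<Rightarrow> nat \<Rightarrow> nat \<Rightarrow> nat" where
  "pf n k i = (if i < k then i else if i = k then n - 1 else if i < n then i - 1 else i)"

lemma inj_pf: "k < n \<Longrightarrow> inj (pf n k)"
  unfolding inj_def pf_def by auto

lemma pf_agree: assumes "length xs = n" "k < n" "i < n"
  shows "((asg (del k xs))(n - 1 := xs!k)) (pf n k i) = xs ! i"
proof -
  have ld: "length (del k xs) = n - 1" using assms by simp
  consider "i < k" | "i = k" | "k < i" by linarith
  then show ?thesis
  proof cases
    case 1
    then show ?thesis using assms ld by (auto simp: pf_def asg_def nth_del)
  next
    case 2
    then show ?thesis by (simp add: pf_def)
  next
    case 3
    then obtain j where j: "i = Suc j" "k \<le> j" by (cases i) auto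
    then show ?thesis using assms ld nth_del[of k xs j] by (auto simp: pf_def asg_def)
  qed
qed

lemma proj_pp:
  assumes "pp_definable \<Gamma> n R" "k < n"
  shows "pp_definable \<Gamma> (n - 1) (del k ` R)"
proof -
  obtain \<phi> where \<phi>: "pp_wf \<Gamma> \<phi>" "pp_fv \<phi> \<subseteq> {..<n}" "R = {xs. length xs = n \<and> pp_sat \<phi> (asg xs)}"
    using assms(1) unfolding pp_definable_def by blast
  define \<psi> where "\<psi> = PEx (n - 1) (rn (pf n k) \<phi>)"
  have inj: "inj (pf n k)" using inj_pf assms(2) .
  have key: "pp_sat \<phi> (asg xs) = pp_sat \<phi> ((asg (del k xs))(n - 1 := xs!k) \<circ> pf n k)"
    if "length xs = n" for xs
  proof (intro sat_cong ballI)
    fix x assume "x \<in> pp_fv \<phi>"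
    then have x: "x < n" using \<phi>(2) by auto
    have "((asg (del k xs))(n - 1 := xs!k) \<circ> pf n k) x = xs ! x"
      using pf_agree[OF that assms(2) x] by (simp only: o_apply)
    moreover have "asg xs x = xs!x" using x that by (simp add: asg_def)
    ultimately show "asg xs x = ((asg (del k xs))(n - 1 := xs!k) \<circ> pf n k) x" by simp
  qed
  have sat\<psi>: "pp_sat \<psi> s = (\<exists>w. pp_sat \<phi> (s(n - 1 := w) \<circ> pf n k))" for s
    unfolding \<psi>_def by (simp add: sat_rn[OF inj])
  have "del k ` R = {ys. length ys = n - 1 \<and> pp_sat \<psi> (asg ys)}"
  proof (intro set_eqI iffI)
    fix ys assume "ys \<in> del k ` R"
    then obtain xs where xs: "xs \<in> R" "ys = del k xs" by blast
    then have "length xs = n" "pp_sat \<phi> (asg xs)" using \<phi>(3) by auto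
    then show "ys \<in> {ys. length ys = n - 1 \<and> pp_sat \<psi> (asg ys)}"
      using key[of xs] xs(2) assms(2) sat\<psi> by auto
  next
    fix ys assume "ys \<in> {ys. length ys = n - 1 \<and> pp_sat \<psi> (asg ys)}"
    then obtain w where ys: "length ys = n - 1" "pp_sat \<phi> ((asg ys)(n - 1 := w) \<circ> pf n k)"
      using sat\<psi> by auto
    let ?xs = "ins k w ys"
    have p: "length ?xs = n" "del k ?xs = ys" "?xs ! k = w"
      using ins_props[of k ys w] assms(2) ys(1) by auto
    then have "pp_sat \<phi> (asg ?xs)" using key[of ?xs] ys(2) by simp
    then have "?xs \<in> R" using \<phi>(3) p(1) by simp
    then show "ys \<in> del k ` R" using p(2) by force
  qed
  moreover have "pp_fv \<psi> \<subseteq> {..<n - 1}"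
  proof
    fix x assume "x \<in> pp_fv \<psi>"
    then obtain i where "i \<in> pp_fv \<phi>" "x = pf n k i" "x \<noteq> n - 1"
      unfolding \<psi>_def by (auto simp: fv_rn[OF inj])
    then show "x \<in> {..<n - 1}" using \<phi>(2) assms(2) by (auto simp: pf_def split: if_splits)
  qed
  moreover have "pp_wf \<Gamma> \<psi>" using \<phi>(1) by (simp add: \<psi>_def wf_rn)
  ultimately show ?thesis unfolding pp_definable_def by blast
qed



definition icl :: "int list set \<Rightarrow> bool" where
  "icl R \<longleftrightarrow> (\<forall>a\<in>R. \<forall>b\<in>R. \<exists>K0. \<forall>K\<ge>K0. comb a b K \<in> R)"

lemma atom_comb:
  assumes "length a = length b" "x < length a" "y < length a" "\<bar>p\<bar> \<le> Bd" "Bd + 2 * M a + 1 \<le> K"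
  shows "(comb a b K ! y - comb a b K ! x = p) \<longleftrightarrow> (a!y - a!x = p \<and> b!y - b!x = p)"
proof -
  define D where "D = (b!y - a!y) - (b!x - a!x)"
  have z: "comb a b K ! y - comb a b K ! x = (a!y - a!x) + K * D"
    using assms(2,3) by (simp add: D_def algebra_simps)
  show ?thesis
  proof (cases "D = 0")
    case True
    then have "b!y - b!x = a!y - a!x" unfolding D_def by linarith
    then show ?thesis using z True by simp
  next
    case False
    have M0: "0 \<le> M a" using abs_le_M[OF assms(2)] by linarith
    have "0 \<le> K" using assms(4,5) M0 by linarith
    then have "K - \<bar>a!y - a!x\<bar> \<le> \<bar>(a!y - a!x) + K * D\<bar>" using big_mul False by blast
    moreover have "\<bar>a!y - a!x\<bar> \<le> 2 * M a" using diff_le_M assms(2,3) by blast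
    ultimately have "\<bar>p\<bar> < \<bar>comb a b K ! y - comb a b K ! x\<bar>" using z assms(4,5) by linarith
    moreover have "\<not> (a!y - a!x = p \<and> b!y - b!x = p)" using False unfolding D_def by auto
    ultimately show ?thesis by auto
  qed
qed

lemma lit_sat_eq: "x < length v \<Longrightarrow> y < length v \<Longrightarrow>
   lit_sat (\<beta>, p, x, y) (asg v) = ((v!y - v!x = p) = \<beta>)"
  by (auto simp: lit_sat_def asg_def suc_pow_def)

lemma len_le1: "length xs \<le> 1 \<Longrightarrow> u \<in> set xs \<Longrightarrow> v \<in> set xs \<Longrightarrow> u = v"
  by (cases xs) auto

lemma horn_icl: assumes "horn_definable n R" shows "icl R"
proof -
  obtain cls where cls: "\<forall>c \<in> set cls. horn_clause c \<and> (\<forall>(b, p, x, y) \<in> set c. x < n \<and> y < n)"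
    and R: "R = {xs. length xs = n \<and> (\<forall>c \<in> set cls. \<exists>l \<in> set c. lit_sat l (asg xs))}"
    using assms unfolding horn_definable_def by blast
  define Bc where "Bc = sum_list (map (\<lambda>c. sum_list (map (\<lambda>l. \<bar>fst (snd l)\<bar>) c)) cls)"
  have bnd: "\<bar>p\<bar> \<le> Bc" if "c \<in> set cls" "(\<beta>, p, x, y) \<in> set c" for c \<beta> p x y
  proof -
    have "\<bar>p\<bar> \<le> sum_list (map (\<lambda>l. \<bar>fst (snd l)\<bar>) c)"
      using that(2) by (intro Groups_List.member_le_sum_list) (force, auto)
    also have "\<dots> \<le> Bc" unfolding Bc_def using that(1)
      by (intro Groups_List.member_le_sum_list) (auto intro!: sum_list_nonneg)
    finally show ?thesis .
  qed
  show ?thesis unfolding icl_def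
  proof (intro ballI)
    fix a b assume a: "a \<in> R" and b: "b \<in> R"
    have la: "length a = n" and lb: "length b = n" using a b R by auto
    show "\<exists>K0. \<forall>K\<ge>K0. comb a b K \<in> R"
    proof (intro exI allI impI)
      fix K assume K: "Bc + 2 * M a + 1 \<le> K"
      let ?z = "comb a b K"
      have lz: "length ?z = n" using la by simp
      have at: "(?z!y - ?z!x = p) \<longleftrightarrow> (a!y - a!x = p \<and> b!y - b!x = p)"
        if "c \<in> set cls" "(\<beta>, p, x, y) \<in> set c" for c \<beta> p x y
        using atom_comb[of a b x y p Bc K] la lb bnd[OF that] cls that K by fastforce
      have "\<exists>l\<in>set c. lit_sat l (asg ?z)" if c: "c \<in> set cls" for c
      proof -
        obtain la' where la': "la' \<in> set c" "lit_sat la' (asg a)" using a R c by auto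
        obtain lb' where lb': "lb' \<in> set c" "lit_sat lb' (asg b)" using b R c by auto
        obtain \<beta>1 p1 x1 y1 where l1: "la' = (\<beta>1, p1, x1, y1)" by (cases la') auto
        obtain \<beta>2 p2 x2 y2 where l2: "lb' = (\<beta>2, p2, x2, y2)" by (cases lb') auto
        have v1: "x1 < n" "y1 < n" using cls c la' l1 by auto
        have v2: "x2 < n" "y2 < n" using cls c lb' l2 by auto
        have s1: "(a!y1 - a!x1 = p1) = \<beta>1" using la'(2) l1 v1 la lit_sat_eq by metis
        have s2: "(b!y2 - b!x2 = p2) = \<beta>2" using lb'(2) l2 v2 lb lit_sat_eq by metis
        have z1: "lit_sat la' (asg ?z) = ((?z!y1 - ?z!x1 = p1) = \<beta>1)" using l1 v1 lz lit_sat_eq by metis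
        have z2: "lit_sat lb' (asg ?z) = ((?z!y2 - ?z!x2 = p2) = \<beta>2)" using l2 v2 lz lit_sat_eq by metis
        show ?thesis
        proof (cases \<beta>1)
          case False
          then have "lit_sat la' (asg ?z)" using z1 s1 at[OF c la'(1)[unfolded l1]] by auto
          then show ?thesis using la' by blast
        next
          case T1: True
          show ?thesis
          proof (cases \<beta>2)
            case False
            then have "lit_sat lb' (asg ?z)" using z2 s2 at[OF c lb'(1)[unfolded l2]] by auto
            then show ?thesis using lb' by blast
          next
            case True
            have "la' \<in> set (filter fst c)" "lb' \<in> set (filter fst c)"
              using la' lb' l1 l2 T1 True by auto
            moreover have "length (filter fst c) \<le> 1" using cls c unfolding horn_clause_def by blast
            ultimately have "la' = lb'" using len_le1 by metis
            then have "lit_sat la' (asg ?z)" using z1 s1 s2 l1 l2 at[OF c la'(1)[unfolded l1]] by auto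
            then show ?thesis using la' by blast
          qed
        qed
      qed
      then show "?z \<in> R" using R lz by auto
    qed
  qed
qed



definition At :: "int \<Rightarrow> nat \<Rightarrow> (int \<times> nat \<times> nat) set" where
  "At B n = {(p, i, j). \<bar>p\<bar> \<le> B \<and> i < n \<and> j < n}"

definition tr :: "int \<Rightarrow> nat \<Rightarrow> int list \<Rightarrow> (int \<times> nat \<times> nat) set" where
  "tr B n t = {(p, i, j) \<in> At B n. t!j - t!i = p}"

lemma finite_At: "finite (At B n)"
proof -
  have "At B n \<subseteq> {-B..B} \<times> {..<n} \<times> {..<n}" unfolding At_def by auto
  then show ?thesis by (rule finite_subset) auto
qed

lemma tr_At: "tr B n t \<subseteq> At B n" unfolding tr_def by auto

lemma tr_comb: assumes "length a = n" "length b = n" "B + 2 * M a + 1 \<le> K"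
  shows "tr B n (comb a b K) = tr B n a \<inter> tr B n b"
proof (intro set_eqI)
  fix \<alpha> :: "int \<times> nat \<times> nat"
  obtain p i j where a: "\<alpha> = (p, i, j)" by (cases \<alpha>) auto
  have e: "(p, i, j) \<in> tr B n v \<longleftrightarrow> \<bar>p\<bar> \<le> B \<and> i < n \<and> j < n \<and> v ! j - v ! i = p" for v
    unfolding tr_def At_def by simp
  show "\<alpha> \<in> tr B n (comb a b K) \<longleftrightarrow> \<alpha> \<in> tr B n a \<inter> tr B n b"
    unfolding a Int_iff e using atom_comb[of a b i j p B K] assms by auto
qed

lemma tr_sty: assumes "length c = n" "length t = n" "tr B n c = tr B n t"
  shows "sty B c t"
  unfolding sty_def
proof (intro conjI allI impI)
  show "length c = length t" using assms by simp
  fix i j assume ij: "i < length c" "j < length c"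
  show "c ! j - c ! i = t ! j - t ! i \<or> B < \<bar>c ! j - c ! i\<bar> \<and> B < \<bar>t ! j - t ! i\<bar>"
  proof (cases "\<bar>c ! j - c ! i\<bar> \<le> B")
    case True
    then have "(c!j - c!i, i, j) \<in> tr B n c" using ij assms(1) unfolding tr_def At_def by auto
    then have "(c!j - c!i, i, j) \<in> tr B n t" using assms(3) by simp
    then have "t!j - t!i = c!j - c!i" unfolding tr_def by simp
    then show ?thesis by simp
  next
    case F1: False
    show ?thesis
    proof (cases "\<bar>t ! j - t ! i\<bar> \<le> B")
      case True
      then have "(t!j - t!i, i, j) \<in> tr B n t" using ij assms(1,2) unfolding tr_def At_def by auto
      then have "(t!j - t!i, i, j) \<in> tr B n c" using assms(3) by simp
      then have "c!j - c!i = t!j - t!i" unfolding tr_def by simp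
      then show ?thesis by simp
    next
      case False
      then show ?thesis using F1 by auto
    qed
  qed
qed

lemma lit_tr: assumes "length v = n" "(p, i, j) \<in> At B n"
  shows "lit_sat (\<beta>, p, i, j) (asg v) = (((p, i, j) \<in> tr B n v) = \<beta>)"
  using assms lit_sat_eq[of i v j \<beta> p] unfolding tr_def At_def by auto

lemma combine:
  assumes ic: "icl R" and len: "\<forall>x\<in>R. length x = n"
    and fin: "finite F" and r0: "r0 \<in> R" "tr B n t \<subseteq> tr B n r0"
    and H: "\<forall>\<alpha>\<in>F. \<exists>r\<in>R. tr B n t \<subseteq> tr B n r \<and> \<alpha> \<notin> tr B n r"
  shows "\<exists>c\<in>R. tr B n t \<subseteq> tr B n c \<and> tr B n c \<inter> F = {}"
  using fin H
proof (induction F rule: finite_induct)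
  case empty
  then show ?case using r0 by blast
next
  case (insert \<alpha> F)
  then obtain c where c: "c \<in> R" "tr B n t \<subseteq> tr B n c" "tr B n c \<inter> F = {}" by blast
  obtain r where r: "r \<in> R" "tr B n t \<subseteq> tr B n r" "\<alpha> \<notin> tr B n r" using insert.prems by blast
  obtain K0 where K0: "\<forall>K\<ge>K0. comb c r K \<in> R" using ic c(1) r(1) unfolding icl_def by blast
  define K where "K = max K0 (B + 2 * M c + 1)"
  have "comb c r K \<in> R" using K0 K_def by simp
  moreover have "tr B n (comb c r K) = tr B n c \<inter> tr B n r"
    using tr_comb[of c n r B K] len c(1) r(1) K_def by auto
  ultimately show ?case using c r by (intro bexI[of _ "comb c r K"]) auto
qed

lemma icl_horn:
  assumes L: "loc n R" and ic: "icl R"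
  shows "horn_definable n R"
proof -
  obtain B where B: "B \<ge> 0" "\<forall>xs ys. xs \<in> R \<longrightarrow> sty B xs ys \<longrightarrow> ys \<in> R"
    using L unfolding loc_def by blast
  have len: "\<forall>x\<in>R. length x = n" using L unfolding loc_def by blast
  let ?A = "At B n"
  let ?tr = "tr B n"
  define Rt where "Rt t = {r\<in>R. ?tr t \<subseteq> ?tr r}" for t
  define good where "good t \<alpha> \<longleftrightarrow> \<alpha> \<in> ?A - ?tr t \<and> (\<forall>r\<in>Rt t. \<alpha> \<in> ?tr r)" for t \<alpha>
  define negs where "negs S = (\<lambda>\<alpha>. (False, \<alpha>)) ` S" for S :: "(int \<times> nat \<times> nat) set"
  define cl where "cl t = (if \<exists>\<alpha>. good t \<alpha> then insert (True, SOME \<alpha>. good t \<alpha>) (negs (?tr t))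
      else negs (?tr t))" for t
  define CL where "CL = cl ` {t. length t = n \<and> t \<notin> R}"
  have cl_sub: "cl t \<subseteq> UNIV \<times> ?A" for t
  proof -
    have n1: "negs (?tr t) \<subseteq> UNIV \<times> ?A" using tr_At unfolding negs_def by blast
    show ?thesis
    proof (cases "\<exists>\<alpha>. good t \<alpha>")
      case True
      have "(SOME \<alpha>. good t \<alpha>) \<in> ?A" using someI_ex[OF True] unfolding good_def by blast
      then have "(True, SOME \<alpha>. good t \<alpha>) \<in> UNIV \<times> ?A" by blast
      moreover have "cl t = insert (True, SOME \<alpha>. good t \<alpha>) (negs (?tr t))"
        unfolding cl_def using True by (simp only: if_True)
      ultimately show ?thesis using n1 by (simp only: insert_subset)
    next
      case False
      then have "cl t = negs (?tr t)" unfolding cl_def by (simp only: if_False)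
      then show ?thesis using n1 by (simp only:)
    qed
  qed
  have finU: "finite (UNIV \<times> ?A :: (bool \<times> int \<times> nat \<times> nat) set)"
    using finite_At by simp
  have "finite CL"
  proof -
    have "CL \<subseteq> Pow (UNIV \<times> ?A)" unfolding CL_def using cl_sub by auto
    moreover have "finite (Pow ((UNIV :: bool set) \<times> ?A))" using finU by simp
    ultimately show ?thesis by (rule finite_subset)
  qed
  then obtain L where L: "set L = CL" using finite_list by blast
  define lst where "lst S = (SOME l. set l = S \<and> distinct l)" for S :: "literal set"
  have lst: "set (lst S) = S \<and> distinct (lst S)" if SCL: "S \<in> CL" for S
  proof -
    obtain t where "S = cl t" using SCL unfolding CL_def by blast
    then have "finite S" using cl_sub[of t] finU by (blast intro: finite_subset)
    then have "\<exists>l. set l = S \<and> distinct l" by (rule finite_distinct_list)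
    then show ?thesis unfolding lst_def by (rule someI_ex)
  qed
  define cls where "cls = map lst L"
  have horn: "horn_clause c \<and> (\<forall>(b, p, x, y) \<in> set c. x < n \<and> y < n)" if cin: "c \<in> set cls" for c
  proof -
    obtain t where t: "c = lst (cl t)" "cl t \<in> CL" using cin L unfolding cls_def CL_def by auto
    have sc: "set c = cl t" "distinct c" using lst[OF t(2)] t(1) by auto
    have "\<forall>x\<in>cl t. fst x \<longrightarrow> x = (True, SOME \<alpha>. good t \<alpha>)"
      unfolding cl_def negs_def by auto
    then have "set (filter fst c) \<subseteq> {(True, SOME \<alpha>. good t \<alpha>)}"
      using sc(1) by auto
    then have "card (set (filter fst c)) \<le> card {(True, SOME \<alpha>. good t \<alpha>)}"
      by (intro card_mono) simp_all
    then have "card (set (filter fst c)) \<le> 1" by simp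
    moreover have "distinct (filter fst c)" using sc by simp
    ultimately have "length (filter fst c) \<le> 1" using distinct_card[of "filter fst c"] by simp
    moreover have "\<forall>(b, p, x, y) \<in> set c. x < n \<and> y < n"
    proof
      fix l assume "l \<in> set c"
      then have "snd l \<in> ?A" using sc(1) cl_sub[of t] by auto
      then show "case l of (b, p, x, y) \<Rightarrow> x < n \<and> y < n" unfolding At_def by (cases l) auto
    qed
    ultimately show ?thesis unfolding horn_clause_def by blast
  qed
  have "R = {xs. length xs = n \<and> (\<forall>c \<in> set cls. \<exists>l \<in> set c. lit_sat l (asg xs))}"
  proof (intro set_eqI iffI)
    fix xs assume xs: "xs \<in> R"
    have lxs: "length xs = n" using len xs by blast
    have "\<exists>l \<in> set c. lit_sat l (asg xs)" if c: "c \<in> set cls" for c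
    proof -
      obtain t where t: "c = lst (cl t)" "length t = n" "t \<notin> R" using c L unfolding cls_def CL_def by auto
      have sc: "set c = cl t" using lst t unfolding CL_def by auto
      show ?thesis
      proof (cases "?tr t \<subseteq> ?tr xs")
        case False
        then obtain \<alpha> where \<alpha>: "\<alpha> \<in> ?tr t" "\<alpha> \<notin> ?tr xs" by blast
        obtain p i j where pij: "\<alpha> = (p, i, j)" by (cases \<alpha>) auto
        have "(False, \<alpha>) \<in> set c" using sc \<alpha> unfolding cl_def negs_def by auto
        moreover have "lit_sat (False, \<alpha>) (asg xs)"
          using lit_tr[OF lxs, of p i j B False] \<alpha> pij tr_At by auto
        ultimately show ?thesis by blast
      next
        case True
        then have xsR: "xs \<in> Rt t" using xs unfolding Rt_def by blast
        show ?thesis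
        proof (cases "\<exists>\<alpha>. good t \<alpha>")
          case True
          define \<alpha> where "\<alpha> = (SOME \<alpha>. good t \<alpha>)"
          have g: "good t \<alpha>" using someI_ex[OF True] unfolding \<alpha>_def .
          obtain p i j where pij: "\<alpha> = (p, i, j)" by (cases \<alpha>) auto
          have "(True, \<alpha>) \<in> set c" using sc True unfolding cl_def \<alpha>_def by auto
          moreover have "lit_sat (True, \<alpha>) (asg xs)"
            using lit_tr[OF lxs, of p i j B True] g xsR pij unfolding good_def by auto
          ultimately show ?thesis by blast
        next
          case False
          then have H: "\<forall>\<alpha>\<in>?A - ?tr t. \<exists>r\<in>R. ?tr t \<subseteq> ?tr r \<and> \<alpha> \<notin> ?tr r"
            unfolding good_def Rt_def by blast
          obtain c where c: "c \<in> R" "?tr t \<subseteq> ?tr c" "?tr c \<inter> (?A - ?tr t) = {}"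
            using combine[OF ic len _ xs True H] finite_At by blast
          then have "?tr c = ?tr t" using tr_At[of B n c] by blast
          then have "sty B c t" using tr_sty len c(1) t(2) by blast
          then have "t \<in> R" using B c(1) by blast
          then show ?thesis using t(3) by blast
        qed
      qed
    qed
    then show "xs \<in> {xs. length xs = n \<and> (\<forall>c \<in> set cls. \<exists>l \<in> set c. lit_sat l (asg xs))}"
      using lxs by blast
  next
    fix xs assume xs: "xs \<in> {xs. length xs = n \<and> (\<forall>c \<in> set cls. \<exists>l \<in> set c. lit_sat l (asg xs))}"
    show "xs \<in> R"
    proof (rule ccontr)
      assume nx: "xs \<notin> R"
      have lxs: "length xs = n" using xs by blast
      have inCL: "cl xs \<in> CL" using nx lxs unfolding CL_def by blast
      then have "lst (cl xs) \<in> set cls" using L unfolding cls_def by auto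
      then obtain l where l: "l \<in> cl xs" "lit_sat l (asg xs)" using xs lst[OF inCL] by blast
      show False
      proof (cases "l \<in> negs (?tr xs)")
        case True
        then obtain p i j where pij: "l = (False, p, i, j)" "(p, i, j) \<in> ?tr xs"
          unfolding negs_def by auto
        then show False using l(2) lit_tr[OF lxs, of p i j B False] tr_At by auto
      next
        case False
        then have ex: "\<exists>\<alpha>. good xs \<alpha>" and le: "l = (True, SOME \<alpha>. good xs \<alpha>)"
          using l(1) unfolding cl_def by (auto split: if_splits)
        define \<alpha> where "\<alpha> = (SOME \<alpha>. good xs \<alpha>)"
        have g: "good xs \<alpha>" using someI_ex[OF ex] unfolding \<alpha>_def .
        obtain p i j where pij: "\<alpha> = (p, i, j)" by (cases \<alpha>) auto
        show False using l(2) le g pij lit_tr[OF lxs, of p i j B True] unfolding \<alpha>_def good_def by auto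
      qed
    qed
  qed
  moreover have "\<forall>c \<in> set cls. horn_clause c \<and> (\<forall>(b, p, x, y) \<in> set c. x < n \<and> y < n)"
    using horn by (intro ballI)
  ultimately show ?thesis unfolding horn_definable_def by (intro exI[of _ cls] conjI)
qed



lemma comb_far:
  assumes "length a = length b" "i < length a" "j < length a" "b!i - a!i \<noteq> b!j - a!j" "0 \<le> K"
  shows "K - 2 * M a \<le> \<bar>comb a b K ! j - comb a b K ! i\<bar>"
proof -
  have z: "comb a b K ! j - comb a b K ! i = (a!j - a!i) + K * ((b!j - a!j) - (b!i - a!i))"
    using assms(2,3) by (simp add: algebra_simps)
  have "K - \<bar>a!j - a!i\<bar> \<le> \<bar>(a!j - a!i) + K * ((b!j - a!j) - (b!i - a!i))\<bar>"
    using big_mul assms(4,5) by simp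
  moreover have "\<bar>a!j - a!i\<bar> \<le> 2 * M a" using diff_le_M assms(2,3) by blast
  ultimately show ?thesis using z by linarith
qed

lemma sub_lemma:
  assumes FE: "fo_expansion \<Gamma>" and ppR: "pp_definable \<Gamma> n R"
    and minH: "\<forall>R'. pp_definable \<Gamma> (n - 1) R' \<longrightarrow> horn_definable (n - 1) R'"
    and pq: "p < n" "q < n" "p \<noteq> q" and ab: "a \<in> R" "b \<in> R"
    and ac: "a!q = a!p + c" and bc: "b!q = b!p + c"
  shows "\<exists>K0. \<forall>K\<ge>K0. comb a b K \<in> R"
proof -
  let ?R1 = "{xs \<in> R. xs!q = xs!p + c}"
  let ?R2 = "del q ` ?R1"
  have "pp_definable \<Gamma> n ?R1" using restrict_pp[OF FE ppR pq(1,2)] .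
  then have "pp_definable \<Gamma> (n - 1) ?R2" using proj_pp pq(2) by blast
  then have "icl ?R2" using minH horn_icl by blast
  moreover have "del q a \<in> ?R2" "del q b \<in> ?R2" using ab ac bc by auto
  ultimately obtain K0 where K0: "\<forall>K\<ge>K0. comb (del q a) (del q b) K \<in> ?R2"
    unfolding icl_def by blast
  have la: "length a = n" and lb: "length b = n" using ab ppR pp_lengths by blast+
  show ?thesis
  proof (intro exI allI impI)
    fix K assume "K0 \<le> K"
    then have "comb (del q a) (del q b) K \<in> ?R2" using K0 by blast
    then obtain xs where xs0: "comb (del q a) (del q b) K = del q xs" "xs \<in> ?R1"
      by (rule imageE)
    then have xs: "xs \<in> R" "xs!q = xs!p + c" "del q xs = comb (del q a) (del q b) K"
      by simp_all
    let ?z = "comb a b K"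
    have lxs: "length xs = n" using xs(1) ppR pp_lengths by blast
    have dz: "del q xs = del q ?z" using xs(3) comb_del[of a b q K] la lb pq by simp
    have "xs!p = ?z!p" using del_nth_eq[of xs ?z q p] dz lxs la pq by simp
    then have "xs!q = ?z!q" using xs(2) ac bc la pq by (simp add: algebra_simps)
    then have "xs = ?z" using del_eq[of xs ?z q] dz lxs la pq by simp
    then show "?z \<in> R" using xs(1) by simp
  qed
qed



lemma tri: "\<bar>x - z\<bar> \<le> \<bar>x - y\<bar> + \<bar>y - (z::int)\<bar>"
  using abs_triangle_ineq[of "x - y" "y - z"] by simp

lemma big:
  assumes locB: "\<forall>xs ys. xs \<in> R \<longrightarrow> sty B xs ys \<longrightarrow> ys \<in> R" and B0: "0 \<le> B"
    and len: "\<forall>x\<in>R. length x = n" and n3: "3 \<le> n"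
    and ab: "a \<in> R" "b \<in> R"
    and nc: "\<forall>K0. \<exists>K\<ge>K0. comb a b K \<notin> R"
    and dinj: "\<forall>i<n. \<forall>j<n. i \<noteq> j \<longrightarrow> b!i - a!i \<noteq> b!j - a!j"
    and subl: "\<And>a b p q c. a \<in> R \<Longrightarrow> b \<in> R \<Longrightarrow> p < n \<Longrightarrow> q < n \<Longrightarrow> p \<noteq> q \<Longrightarrow>
        a!q = a!p + c \<Longrightarrow> b!q = b!p + c \<Longrightarrow> \<exists>K0. \<forall>K\<ge>K0. comb a b K \<in> R"
    and projl: "\<And>k. k < n \<Longrightarrow> icl (del k ` R)"
  shows False
proof -
  have la: "length a = n" and lb: "length b = n" using ab len by auto
  have M0: "0 \<le> M a" using abs_le_M[of 0 a] la n3 by linarith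
  have zfar: "K - 2 * M a \<le> \<bar>comb a b K ! j - comb a b K ! i\<bar>"
    if "i < n" "j < n" "i \<noteq> j" "0 \<le> K" for i j K
    using comb_far[of a b i j K] that la lb dinj by auto
  have G: "xs \<notin> R" if lx: "length xs = n" and gx: "\<forall>i<n. \<forall>j<n. i \<noteq> j \<longrightarrow> B < \<bar>xs!j - xs!i\<bar>" for xs
  proof
    assume xR: "xs \<in> R"
    obtain K where K: "K \<ge> B + 2 * M a + 1" "comb a b K \<notin> R" using nc by blast
    have "sty B xs (comb a b K)"
      unfolding sty_def
    proof (intro conjI allI impI)
      show "length xs = length (comb a b K)" using lx la by simp
      fix i j assume ij: "i < length xs" "j < length xs"
      show "xs ! j - xs ! i = comb a b K ! j - comb a b K ! i \<or>
            B < \<bar>xs ! j - xs ! i\<bar> \<and> B < \<bar>comb a b K ! j - comb a b K ! i\<bar>"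
      proof (cases "i = j")
        case True then show ?thesis by simp
      next
        case False
        have "K - 2 * M a \<le> \<bar>comb a b K ! j - comb a b K ! i\<bar>"
          using zfar[of i j K] ij lx False K(1) M0 B0 by auto
        then show ?thesis using gx ij lx False K(1) by auto
      qed
    qed
    then show False using locB xR K(2) by blast
  qed
  have E: "\<exists>e j. e \<in> R \<and> j < n \<and> j \<noteq> k \<and> \<bar>e!k - e!j\<bar> \<le> B \<and>
      (\<forall>i<n. \<forall>i'<n. i \<noteq> i' \<longrightarrow> {i, i'} \<noteq> {k, j} \<longrightarrow> S < \<bar>e!i' - e!i\<bar>)"
    if k: "k < n" and S0: "0 \<le> S" for k S
  proof -
    have "del k a \<in> del k ` R" "del k b \<in> del k ` R" using ab by auto
    then obtain K0 where K0: "\<forall>K\<ge>K0. comb (del k a) (del k b) K \<in> del k ` R"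
      using projl[OF k] unfolding icl_def by blast
    define K where "K = max K0 (S + B + 2 * M a + 1)"
    let ?z = "comb a b K"
    have Kb: "S + B + 2 * M a + 1 \<le> K" by (simp add: K_def)
    have "comb (del k a) (del k b) K \<in> del k ` R" using K0 K_def by simp
    then obtain xs where xs0: "comb (del k a) (del k b) K = del k xs" "xs \<in> R" by (rule imageE)
    have lx: "length xs = n" using xs0(2) len by blast
    have dz: "del k xs = del k ?z" using xs0(1) comb_del[of a b k K] la lb k by simp
    have xz: "xs!i = ?z!i" if "i < n" "i \<noteq> k" for i
      using del_nth_eq[of xs ?z k i] dz lx la k that by simp
    have farnk: "S + B < \<bar>xs!i' - xs!i\<bar>" if "i < n" "i' < n" "i \<noteq> i'" "i \<noteq> k" "i' \<noteq> k" for i i'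
    proof -
      have "K - 2 * M a \<le> \<bar>?z ! i' - ?z ! i\<bar>" using zfar[of i i' K] that Kb S0 B0 M0 by auto
      moreover have "xs!i' - xs!i = ?z!i' - ?z!i" using xz[of i] xz[of i'] that by simp
      ultimately show ?thesis using Kb by linarith
    qed
    obtain i i' where ii: "i < n" "i' < n" "i \<noteq> i'" "\<bar>xs!i' - xs!i\<bar> \<le> B"
      using G[OF lx] xs0(2) by force
    obtain j where j: "j < n" "j \<noteq> k" "\<bar>xs!k - xs!j\<bar> \<le> B"
    proof (cases "i = k")
      case True
      then show ?thesis using that[of i'] ii by (simp add: abs_minus_commute)
    next
      case False
      then have "i' = k" using farnk[of i i'] ii S0 by force
      then show ?thesis using that[of i] ii False by simp
    qed
    have "\<forall>i<n. \<forall>i'<n. i \<noteq> i' \<longrightarrow> {i, i'} \<noteq> {k, j} \<longrightarrow> S < \<bar>xs!i' - xs!i\<bar>"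
    proof (intro allI impI)
      fix i i' assume h: "i < n" "i' < n" "i \<noteq> i'" "{i, i'} \<noteq> {k, j}"
      show "S < \<bar>xs!i' - xs!i\<bar>"
      proof (cases "i = k")
        case True
        then have "i' \<noteq> j" using h by auto
        then have "S + B < \<bar>xs!i' - xs!j\<bar>" using farnk[of j i'] h j True by auto
        then show ?thesis unfolding True using j(3) tri[of "xs!i'" "xs!j" "xs!k"] by linarith
      next
        case F1: False
        show ?thesis
        proof (cases "i' = k")
          case True
          then have "i \<noteq> j" using h by auto
          then have "S + B < \<bar>xs!j - xs!i\<bar>" using farnk[of i j] h j True by auto
          then show ?thesis unfolding True using j(3) tri[of "xs!j" "xs!i" "xs!k"] abs_minus_commute[of "xs!j" "xs!k"] by linarith
        next
          case False
          then show ?thesis using farnk[of i i'] h F1 B0 by linarith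
        qed
      qed
    qed
    then show ?thesis using xs0(2) j by blast
  qed
  obtain f i0 where f: "f \<in> R" "i0 < n" "i0 \<noteq> 0" "\<bar>f!0 - f!i0\<bar> \<le> B"
    and fprop: "\<forall>i<n. \<forall>i'<n. i \<noteq> i' \<longrightarrow> {i, i'} \<noteq> {0, i0} \<longrightarrow> B < \<bar>f!i' - f!i\<bar>"
    using E[of 0 B] n3 B0 by auto
  have lf: "length f = n" using f(1) len by blast
  define k where "k = (if i0 = 1 then 2 else 1 :: nat)"
  have k: "k < n" "k \<noteq> 0" "k \<noteq> i0" using n3 unfolding k_def by auto
  define W where "W = M f"
  have W: "\<bar>f!y - f!x\<bar> \<le> 2 * W" if "x < n" "y < n" for x y
    using diff_le_M[of x f y] that lf unfolding W_def by simp
  define S where "S = 2 * W + B + 1"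
  have W0: "0 \<le> W" using W[of 0 0] n3 by simp
  have S0: "0 \<le> S" using W0 B0 unfolding S_def by simp
  obtain e j where e: "e \<in> R" "j < n" "j \<noteq> k" "\<bar>e!k - e!j\<bar> \<le> B"
    and eprop: "\<forall>i<n. \<forall>i'<n. i \<noteq> i' \<longrightarrow> {i, i'} \<noteq> {k, j} \<longrightarrow> S < \<bar>e!i' - e!i\<bar>"
    using E[OF k(1) S0] by blast
  have le: "length e = n" using e(1) len by blast
  define p where "p = (if j = 0 then i0 else 0)"
  have p: "p < n" "p \<noteq> j" "p \<noteq> k" using f(2,3) k n3 unfolding p_def by auto
  have ekp: "S < \<bar>e!k - e!p\<bar>" using eprop p k e(3) by (metis doubleton_eq_iff)
  have ejp: "S < \<bar>e!j - e!p\<bar>" using eprop p k e(2,3) by (metis doubleton_eq_iff)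
  define f' where "f' = f[k := f!p + (e!k - e!p)]"
  have lf': "length f' = n" using lf unfolding f'_def by simp
  have f'k: "f'!k = f!p + (e!k - e!p)" using lf k unfolding f'_def by simp
  have f'o: "f'!x = f!x" if "x \<noteq> k" for x using that unfolding f'_def by simp
  have farf': "B < \<bar>f'!k - f'!x\<bar> \<and> B < \<bar>f!k - f!x\<bar>" if "x < n" "x \<noteq> k" for x
  proof
    have "\<bar>e!k - e!p\<bar> \<le> \<bar>f'!k - f'!x\<bar> + \<bar>f!x - f!p\<bar>"
      using f'k f'o[OF that(2)] abs_triangle_ineq[of "f'!k - f'!x" "f!x - f!p"] by simp
    then show "B < \<bar>f'!k - f'!x\<bar>" using W[of p x] that p ekp unfolding S_def by linarith
    have "{k, x} \<noteq> {0, i0}" using k by (metis doubleton_eq_iff)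
    then show "B < \<bar>f!k - f!x\<bar>" using fprop that k by (metis abs_minus_commute)
  qed
  have "sty B f f'"
    unfolding sty_def
  proof (intro conjI allI impI)
    show "length f = length f'" using lf lf' by simp
    fix x y assume xy: "x < length f" "y < length f"
    show "f ! y - f ! x = f' ! y - f' ! x \<or> B < \<bar>f ! y - f ! x\<bar> \<and> B < \<bar>f' ! y - f' ! x\<bar>"
    proof (cases "x = k"; cases "y = k")
      assume "x = k" "y = k" then show ?thesis by simp
    next
      assume h: "x = k" "y \<noteq> k"
      then show ?thesis using farf'[of y] xy lf by (simp add: abs_minus_commute)
    next
      assume h: "x \<noteq> k" "y = k"
      then show ?thesis using farf'[of x] xy lf by simp
    next
      assume h: "x \<noteq> k" "y \<noteq> k"
      then show ?thesis using f'o by simp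
    qed
  qed
  then have f'R: "f' \<in> R" using locB f(1) by blast
  obtain K0 where K0: "\<forall>K\<ge>K0. comb e f' K \<in> R"
    using subl[OF e(1) f'R p(1) k(1) p(3), of "e!k - e!p"] f'k f'o[OF p(3)] by auto
  define K where "K = max K0 (B + 2 * M e + 1)"
  have Kb: "B + 2 * M e + 1 \<le> K" by (simp add: K_def)
  have M0e: "0 \<le> M e" using abs_le_M[of 0 e] le n3 by linarith
  let ?z = "comb e f' K"
  have zR: "?z \<in> R" using K0 K_def by simp
  have "B < \<bar>?z!y - ?z!x\<bar>" if xy: "x < n" "y < n" "x \<noteq> y" for x y
  proof (cases "f'!x - e!x = f'!y - e!y")
    case False
    have "K - 2 * M e \<le> \<bar>?z ! y - ?z ! x\<bar>"
      using comb_far[of e f' x y K] False xy le lf' Kb M0e B0 by auto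
    then show ?thesis using Kb by linarith
  next
    case True
    have "?z!y - ?z!x = (e!y - e!x) + K * ((f'!y - e!y) - (f'!x - e!x))"
      using xy le by (simp add: algebra_simps)
    then have zd: "?z!y - ?z!x = e!y - e!x" using True by simp
    have "{x, y} \<noteq> {k, j}"
    proof
      assume "{x, y} = {k, j}"
      then have "f'!k - e!k = f'!j - e!j" using True by (auto simp: doubleton_eq_iff)
      then have "e!j - e!p = f!j - f!p" using f'k f'o[OF e(3)] by simp
      then have "\<bar>e!j - e!p\<bar> = \<bar>f!j - f!p\<bar>" by simp
      then show False using ejp W[OF p(1) e(2)] B0 unfolding S_def by linarith
    qed
    then have "S < \<bar>e!y - e!x\<bar>" using eprop xy by blast
    then show ?thesis using zd W0 unfolding S_def by linarith
  qed
  moreover have "length ?z = n" using le by simp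
  ultimately show False using G zR by blast
qed



lemma minimal_is_2:
  assumes FE: "fo_expansion \<Gamma>" and ppR: "pp_definable \<Gamma> n R" and nh: "\<not> horn_definable n R"
    and min: "\<forall>m<n. \<forall>R'. pp_definable \<Gamma> m R' \<longrightarrow> horn_definable m R'"
  shows "n = 2"
proof -
  have L: "loc n R" using pp_loc[OF FE ppR] .
  obtain B where B0: "0 \<le> B" and locB: "\<forall>xs ys. xs \<in> R \<longrightarrow> sty B xs ys \<longrightarrow> ys \<in> R"
    using L unfolding loc_def by blast
  have len: "\<forall>x\<in>R. length x = n" using L unfolding loc_def by blast
  have "\<not> icl R" using icl_horn[OF L] nh by blast
  then obtain a b where ab: "a \<in> R" "b \<in> R" and nc: "\<forall>K0. \<exists>K\<ge>K0. comb a b K \<notin> R"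
    unfolding icl_def by blast
  have la: "length a = n" and lb: "length b = n" using ab len by auto
  have n0: "n \<noteq> 0"
  proof
    assume "n = 0"
    then have "comb a b K = a" for K using la by (simp add: comb_def)
    moreover obtain K where "comb a b K \<notin> R" using nc by blast
    ultimately show False using ab by simp
  qed
  have minH: "\<forall>R'. pp_definable \<Gamma> (n - 1) R' \<longrightarrow> horn_definable (n - 1) R'"
    using min n0 by simp
  have subl: "\<exists>K0. \<forall>K\<ge>K0. comb a' b' K \<in> R"
    if "a' \<in> R" "b' \<in> R" "p < n" "q < n" "p \<noteq> q" "a'!q = a'!p + c" "b'!q = b'!p + c"
    for a' b' p q c
    using sub_lemma[OF FE ppR minH that(3,4,5,1,2,6,7)] .
  have dinj: "\<forall>i<n. \<forall>j<n. i \<noteq> j \<longrightarrow> b!i - a!i \<noteq> b!j - a!j"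
  proof (intro allI impI notI)
    fix i j assume h: "i < n" "j < n" "i \<noteq> j" "b!i - a!i = b!j - a!j"
    have "b!j = b!i + (a!j - a!i)" using h(4) by simp
    then obtain K0 where "\<forall>K\<ge>K0. comb a b K \<in> R"
      using subl[OF ab h(1,2,3), of "a!j - a!i"] by auto
    then show False using nc by blast
  qed
  have n1: "n \<noteq> 1"
  proof
    assume n1: "n = 1"
    have "sty B a (comb a b K)" for K
      unfolding sty_def using la n1 by auto
    then have "comb a b K \<in> R" for K using locB ab by blast
    then show False using nc by blast
  qed
  have projl: "icl (del k ` R)" if "k < n" for k
  proof -
    have "pp_definable \<Gamma> (n - 1) (del k ` R)" using proj_pp[OF ppR that] .
    then show ?thesis using minH horn_icl by blast
  qed
  show "n = 2"
  proof (rule ccontr)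
    assume "n \<noteq> 2"
    then have n3: "3 \<le> n" using n0 n1 by linarith
    show False by (rule big[OF locB B0 len n3 ab nc dinj subl projl])
  qed
qed

theorem mainTheorem17:
  fixes \<Gamma> :: zstructure
  assumes "fo_expansion \<Gamma>"
    and "\<exists>n R. pp_definable \<Gamma> n R \<and> \<not> horn_definable n R"
  shows "\<exists>R. pp_definable \<Gamma> 2 R \<and> \<not> horn_definable 2 R"
proof -
  let ?P = "\<lambda>n. \<exists>R. pp_definable \<Gamma> n R \<and> \<not> horn_definable n R"
  obtain n where n: "?P n" and min: "\<forall>m<n. \<not> ?P m"
    using assms(2) exists_least_iff[of ?P] by blast
  obtain R where R: "pp_definable \<Gamma> n R" "\<not> horn_definable n R" using n by blast
  have "\<forall>m<n. \<forall>R'. pp_definable \<Gamma> m R' \<longrightarrow> horn_definable m R'" using min by blast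
  then have "n = 2" using minimal_is_2[OF assms(1) R] by blast
  then show ?thesis using R by blast
qed


end
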